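(* Let $\gamma>0$ and $s>0$, let $G(u,v;s)=(u^2+v^2)^{-s}$ and $D_1=\partial/\partial u$. Define polynomials $P_j(u,v;s)$ by $P_1(u,v;s)=-2su$ and $P_{j+1}(u,v;s)=(u^2+v^2)\,\partial_uP_j(u,v;s)-2(s+j)uP_j(u,v;s)$. Then for $u\ge\gamma$, $v\in\mathbb R$ and $j\ge1$, $$\frac{D_1^jG(u,v;s)}{G(u,v;s)}=\frac{P_j(u,v;s)}{(u^2+v^2)^j},$$ and the following estimates hold for all $u\ge\gamma$, $v\in\mathbb R$: $$-\frac{2s}{\gamma}\le\frac{D_1G}{G}<0,\qquad -\frac{s}{4\gamma^2(s+1)}\le\frac{D_1^2G}{G}\le\frac{2s(2s+1)}{\gamma^2},$$ $$-\frac{2s(2s+1)(2s+2)}{\gamma^3}\le\frac{D_1^3G}{G}\le\frac{2s(2s+2)}{\gamma^3(s+2)^2},\qquad -\frac{2s(s+1)(2s+2)\cdot3}{\gamma^4}\le\frac{D_1^4G}{G}\le\frac{2s(2s+1)(2s+2)(2s+3)}{\gamma^4},$$ where $G$ and its derivatives are evaluated at $(u,v;s)$.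
   Context: In particular $P_2=2s(2s+1)u^2-2sv^2$, $P_3=-2s(2s+1)(2s+2)u^3+3(2s)(2s+2)uv^2$, $P_4=(2s)(2s+2)[(2s+1)(2s+3)u^4-6(2s+3)u^2v^2+3v^4]$. *)

theory Defs
  imports "HOL-Analysis.Analysis" "HOL-Computational_Algebra.Polynomial"
begin

definition Gfun :: "real \<Rightarrow> real \<Rightarrow> real \<Rightarrow> real" where
  "Gfun v s u = (u\<^sup>2 + v\<^sup>2) powr (- s)"

text \<open>P_j(u,v;s) as a polynomial in u whose coefficients depend on v and s.
  P_1 = -2 s u, P_(j+1) = (u^2+v^2) dP_j/du - 2(s+j) u P_j.  Index 0 is unused.\<close>
fun Ppoly :: "real \<Rightarrow> real \<Rightarrow> nat \<Rightarrow> real poly" where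
  "Ppoly v s 0 = 0"
| "Ppoly v s (Suc 0) = [:0, -2 * s:]"
| "Ppoly v s (Suc (Suc j)) =
     [:v\<^sup>2, 0, 1:] * pderiv (Ppoly v s (Suc j))
     - smult (2 * (s + real (Suc j))) [:0, 1:] * Ppoly v s (Suc j)"

end

theory Submission
  imports Defs
begin


lemma Hderiv:
  fixes x v a :: real and p :: "real poly"
  assumes x: "x > 0"
  shows "((\<lambda>y. poly p y * (y\<^sup>2 + v\<^sup>2) powr a) has_field_derivative
     (x\<^sup>2+v\<^sup>2) powr (a - 1) * ((x\<^sup>2+v\<^sup>2) * poly (pderiv p) x + 2 * a * x * poly p x)) (at x)"
proof -
  have w: "x\<^sup>2 + v\<^sup>2 > 0" using x by (intro add_pos_nonneg) auto
  have d1: "((\<lambda>y. y\<^sup>2 + v\<^sup>2) has_field_derivative 2 * x) (at x)"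
    by (auto intro!: derivative_eq_intros)
  note d2 = DERIV_fun_powr[OF d1 w, of a]
  have "((\<lambda>y. poly p y * (y\<^sup>2 + v\<^sup>2) powr a) has_field_derivative
     poly (pderiv p) x * (x\<^sup>2+v\<^sup>2) powr a + poly p x * (a * (x\<^sup>2+v\<^sup>2) powr (a - of_nat 1) * (2 * x))) (at x)"
    using DERIV_mult[OF poly_DERIV d2, of p] by (simp add: mult_ac)
  moreover have "(x\<^sup>2+v\<^sup>2) powr a = (x\<^sup>2+v\<^sup>2) powr (a - 1) * (x\<^sup>2+v\<^sup>2)"
    using w by (simp add: powr_diff)
  ultimately show ?thesis by (simp add: algebra_simps)
qed

lemma key:
  fixes x v s :: real
  assumes "x > 0"
  shows "(deriv ^^ Suc k) (Gfun v s) x = poly (Ppoly v s (Suc k)) x * (x\<^sup>2+v\<^sup>2) powr (-s - real (Suc k))"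
  using assms
proof (induction k arbitrary: x)
  case 0
  have w: "x\<^sup>2 + v\<^sup>2 > 0" using 0 by (intro add_pos_nonneg) auto
  have d1: "((\<lambda>y. y\<^sup>2 + v\<^sup>2) has_field_derivative 2 * x) (at x)"
    by (auto intro!: derivative_eq_intros)
  have "deriv (Gfun v s) x = -s * (x\<^sup>2+v\<^sup>2) powr (-s - 1) * (2 * x)"
    unfolding Gfun_def using DERIV_fun_powr[OF d1 w, of "-s"] by (intro DERIV_imp_deriv) simp
  then show ?case by (simp add: algebra_simps)
next
  case (Suc k)
  have "((deriv ^^ Suc k) (Gfun v s) has_field_derivative
     (x\<^sup>2+v\<^sup>2) powr ((-s - real (Suc k)) - 1) * ((x\<^sup>2+v\<^sup>2) * poly (pderiv (Ppoly v s (Suc k))) x + 2 * (-s - real (Suc k)) * x * poly (Ppoly v s (Suc k)) x)) (at x)"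
    by (rule has_field_derivative_transform_within_open[OF Hderiv[OF Suc.prems], of "{0<..}"])
       (use Suc in auto)
  then have "deriv ((deriv ^^ Suc k) (Gfun v s)) x = (x\<^sup>2+v\<^sup>2) powr ((-s - real (Suc k)) - 1) * ((x\<^sup>2+v\<^sup>2) * poly (pderiv (Ppoly v s (Suc k))) x + 2 * (-s - real (Suc k)) * x * poly (Ppoly v s (Suc k)) x)"
    by (rule DERIV_imp_deriv)
  moreover have "-s - real (Suc k) - 1 = -s - real (Suc (Suc k))" by simp
  ultimately show ?case by (simp add: algebra_simps power2_eq_square)
qed



lemma P1: "poly (Ppoly v s 1) u = - 2  *  s  *  u" by simp
lemma P2: "poly (Ppoly v s 2) u = 2 * s * (2 * s+1) * u^2 - 2 * s * v^2"
  by (simp add: numeral_2_eq_2 pderiv_pCons pderiv_add pderiv_diff pderiv_smult pderiv_mult algebra_simps power2_eq_square)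
lemma P3: "poly (Ppoly v s 3) u = -2 * s * (2 * s+1) * (2 * s+2) * u^3 + 3 * (2 * s) * (2 * s+2) * u * v^2"
  by (simp add: numeral_3_eq_3 pderiv_pCons pderiv_add pderiv_diff pderiv_smult pderiv_mult algebra_simps power2_eq_square power3_eq_cube)
lemma P4: "poly (Ppoly v s 4) u = (2 * s) * (2 * s+2) * ((2 * s+1) * (2 * s+3) * u^4 - 6 * (2 * s+3) * u^2 * v^2 + 3 * v^4)"
  by (simp add: eval_nat_numeral pderiv_pCons pderiv_add pderiv_diff pderiv_smult pderiv_mult algebra_simps power2_eq_square power3_eq_cube)

lemma ratio:
  fixes u v s :: real
  assumes "u > 0" "j \<ge> 1"
  shows "(deriv ^^ j) (Gfun v s) u / Gfun v s u = poly (Ppoly v s j) u / (u\<^sup>2 + v\<^sup>2) ^ j"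
proof -
  obtain k where j: "j = Suc k" using assms by (cases j) auto
  have w: "u\<^sup>2 + v\<^sup>2 > 0" using assms by (intro add_pos_nonneg) auto
  have "(u\<^sup>2 + v\<^sup>2) powr (-s - real j) / (u\<^sup>2 + v\<^sup>2) powr (-s) = (u\<^sup>2 + v\<^sup>2) powr (- real j)"
    by (simp add: powr_diff[symmetric])
  also have "\<dots> = 1 / (u\<^sup>2 + v\<^sup>2) ^ j" using w by (simp add: powr_minus powr_realpow divide_inverse)
  finally have "(u\<^sup>2 + v\<^sup>2) powr (-s - real j) / (u\<^sup>2 + v\<^sup>2) powr (-s) = 1 / (u\<^sup>2 + v\<^sup>2) ^ j" .
  then show ?thesis using key[OF assms(1), of k v s] unfolding j Gfun_def
    by (metis (no_types, lifting) j times_divide_eq_right mult.right_neutral)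
qed



lemma B1:
  fixes g s u v :: real
  assumes g: "g > 0" "u \<ge> g" and s: "s > 0"
  defines "w \<equiv> u\<^sup>2 + v\<^sup>2"
  shows "- 2 * s / g \<le> - 2 * s * u / w" "- 2 * s * u / w < 0"
proof -
  have u: "u > 0" using g by linarith
  have w: "w \<ge> u\<^sup>2" "w > 0" using u by (auto simp: w_def intro!: add_pos_nonneg)
  have "u / w \<le> 1 / u" using w u by (simp add: divide_simps power2_eq_square)
  also have "\<dots> \<le> 1 / g" using g u by (simp add: divide_simps)
  finally have "u / w \<le> 1 / g" .
  then have "2 * s * (u / w) \<le> 2 * s * (1 / g)" by (rule mult_left_mono) (use s in auto)
  then show "- 2 * s / g \<le> - 2 * s * u / w" by simp
  show "- 2 * s * u / w < 0" using s u w by (simp add: divide_neg_pos)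
qed

lemma B2:
  fixes g s u v :: real
  assumes g: "g > 0" "u \<ge> g" and s: "s > 0"
  defines "w \<equiv> u\<^sup>2 + v\<^sup>2"
  shows "- s / (4 * g\<^sup>2 * (s + 1)) \<le> (2 * s * (2 * s+1) * u^2 - 2 * s * v^2) / w^2"
        "(2 * s * (2 * s+1) * u^2 - 2 * s * v^2) / w^2 \<le> 2 * s * (2 * s + 1) / g\<^sup>2"
proof -
  have u: "u > 0" using g by linarith
  have w: "w \<ge> u\<^sup>2" "w > 0" using u by (auto simp: w_def intro!: add_pos_nonneg)
  have gu: "g\<^sup>2 \<le> u\<^sup>2" using g by (simp add: power_mono)
  have e: "2 * s * (2 * s+1) * u^2 - 2 * s * v^2 = 2 * s * ((2 * s+2) * u^2 - w)" by (simp add: w_def algebra_simps)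
  have sq: "0 \<le> s * (4 * (s+1) * u^2 - w)^2" using s by simp
  have "- s / (4 * u\<^sup>2 * (s + 1)) \<le> 2 * s * ((2 * s+2) * u^2 - w) / w^2"
    using w u s by (simp add: divide_simps) (use sq in \<open>simp add: algebra_simps power2_eq_square\<close>)
  moreover have "- s / (4 * g\<^sup>2 * (s + 1)) \<le> - s / (4 * u\<^sup>2 * (s + 1))"
    using gu g s by (simp add: divide_simps)
  ultimately show "- s / (4 * g\<^sup>2 * (s + 1)) \<le> (2 * s * (2 * s+1) * u^2 - 2 * s * v^2) / w^2" using e by simp
  have "(2 * s * (2 * s+1) * u^2 - 2 * s * v^2) / w^2 \<le> 2 * s * (2 * s+1) * u^2 / w^2"
    using s w by (simp add: divide_right_mono)
  also have "\<dots> \<le> 2 * s * (2 * s+1) * u^2 / (u^2)^2"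
    using s w u by (intro divide_left_mono power_mono) auto
  also have "\<dots> = 2 * s * (2 * s+1) / u^2" using u by (simp add: power2_eq_square)
  also have "\<dots> \<le> 2 * s * (2 * s+1) / g^2" using s gu g by (intro divide_left_mono) auto
  finally show "(2 * s * (2 * s+1) * u^2 - 2 * s * v^2) / w^2 \<le> 2 * s * (2 * s + 1) / g\<^sup>2" .
qed



lemma B3:
  fixes g s u v :: real
  assumes g: "g > 0" "u \<ge> g" and s: "s > 0"
  defines "w \<equiv> u\<^sup>2 + v\<^sup>2"
  shows "- (2 * s * (2 * s + 1) * (2 * s + 2)) / g ^ 3 \<le> (-2 * s * (2 * s+1) * (2 * s+2) * u^3 + 3 * (2 * s) * (2 * s+2) * u * v^2) / w^3"
        "(-2 * s * (2 * s+1) * (2 * s+2) * u^3 + 3 * (2 * s) * (2 * s+2) * u * v^2) / w^3 \<le> 2 * s * (2 * s + 2) / (g ^ 3 * (s + 2)\<^sup>2)"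
proof -
  have u: "u > 0" using g by linarith
  have w: "w \<ge> u\<^sup>2" "w > 0" using u by (auto simp: w_def intro!: add_pos_nonneg)
  have gu: "g^3 \<le> u^3" using g by (simp add: power_mono)
  define K where "K = 2 * s * (2 * s + 1) * (2 * s + 2)"
  have K: "K > 0" using s by (simp add: K_def)
  have "- K / g^3 \<le> - K / u^3" using K gu g by (simp add: divide_simps)
  also have "\<dots> = - K * u^3 / (u^2)^3" using u by (simp add: divide_simps)
  also have "\<dots> \<le> - K * u^3 / w^3"
    using K u w by (intro divide_left_mono_neg power_mono) (auto simp: mult_pos_pos)
  also have "\<dots> \<le> (-2 * s * (2 * s+1) * (2 * s+2) * u^3 + 3 * (2 * s) * (2 * s+2) * u * v^2) / w^3"
    using w s u unfolding K_def by (intro divide_right_mono) auto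
  finally show "- (2 * s * (2 * s + 1) * (2 * s + 2)) / g ^ 3 \<le> (-2 * s * (2 * s+1) * (2 * s+2) * u^3 + 3 * (2 * s) * (2 * s+2) * u * v^2) / w^3"
    unfolding K_def by simp
  define m where "m = (s+2) * u^2"
  have m: "m > 0" using s u by (simp add: m_def)
  have key: "m^2 * (3 * w - 2 * m) \<le> w^3"
  proof -
    have "0 \<le> (w-m)^2 * (w+2 * m)" using w m by simp
    then show ?thesis by (simp add: algebra_simps power2_eq_square power3_eq_cube)
  qed
  have e: "-2 * s * (2 * s+1) * (2 * s+2) * u^3 + 3 * (2 * s) * (2 * s+2) * u * v^2 = 2 * s * (2 * s+2) * (u * (3 * w - 2 * m))"
    by (simp add: m_def w_def algebra_simps power2_eq_square power3_eq_cube)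
  have "u * (3 * w - 2 * m) / w^3 \<le> 1 / ((s+2)^2 * u^3)"
  proof -
    have eq: "u * (3 * w - 2 * m) * ((s+2)^2 * u^3) = m^2 * (3 * w - 2 * m)"
      by (simp add: m_def power2_eq_square power3_eq_cube algebra_simps)
    have "u * (3 * w - 2 * m) * ((s+2)^2 * u^3) \<le> 1 * w^3" unfolding eq mult_1_left by (rule key)
    then show ?thesis using w u s by (simp add: divide_simps)
  qed
  also have "\<dots> \<le> 1 / (g^3 * (s+2)^2)" using gu g s by (simp add: divide_simps mult.commute)
  finally have "2 * s * (2 * s+2) * (u * (3 * w - 2 * m) / w^3) \<le> 2 * s * (2 * s+2) * (1 / (g^3 * (s+2)^2))"
    by (rule mult_left_mono) (use s in auto)
  then show "(-2 * s * (2 * s+1) * (2 * s+2) * u^3 + 3 * (2 * s) * (2 * s+2) * u * v^2) / w^3 \<le> 2 * s * (2 * s + 2) / (g ^ 3 * (s + 2)\<^sup>2)"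
    unfolding e by simp
qed



lemma B4:
  fixes g s u v :: real
  assumes g: "g > 0" "u \<ge> g" and s: "s > 0"
  defines "w \<equiv> u\<^sup>2 + v\<^sup>2"
  shows "- (2 * s * (s + 1) * (2 * s + 2) * 3) / g ^ 4 \<le> (2 * s) * (2 * s+2) * ((2 * s+1) * (2 * s+3) * u^4 - 6 * (2 * s+3) * u^2 * v^2 + 3 * v^4) / w^4"
        "(2 * s) * (2 * s+2) * ((2 * s+1) * (2 * s+3) * u^4 - 6 * (2 * s+3) * u^2 * v^2 + 3 * v^4) / w^4 \<le> 2 * s * (2 * s + 1) * (2 * s + 2) * (2 * s + 3) / g ^ 4"
proof -
  have u: "u > 0" using g by linarith
  define a where "a = u^2"
  define b where "b = v^2"
  have a: "a > 0" using u by (simp add: a_def)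
  have b: "b \<ge> 0" by (simp add: b_def)
  have wab: "w = a + b" by (simp add: w_def a_def b_def)
  have w: "w > 0" using a b wab by simp
  define Q where "Q = (2 * s+1) * (2 * s+3) * a^2 - 6 * (2 * s+3) * a * b + 3 * b^2"
  define c where "c = (2 * s) * (2 * s+2)"
  have c: "c > 0" using s by (simp add: c_def)
  have eP: "(2 * s) * (2 * s+2) * ((2 * s+1) * (2 * s+3) * u^4 - 6 * (2 * s+3) * u^2 * v^2 + 3 * v^4) = c * Q"
    by (simp add: Q_def c_def a_def b_def power2_eq_square power4_eq_xxxx algebra_simps)
  have gu: "g^4 \<le> a^2" using g by (simp add: a_def flip: power_mult)
  have g4: "g^4 > 0" using g by simp
  have nc1: "2 * s * (2 * s + 1) * (2 * s + 2) * (2 * s + 3) = c * ((2 * s+1) * (2 * s+3))" by (simp add: c_def algebra_simps)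
  have nc2: "2 * s * (s + 1) * (2 * s + 2) * 3 = c * (3 * (s+1))" by (simp add: c_def algebra_simps)
  have up: "Q * a^2 \<le> (2 * s+1) * (2 * s+3) * w^4"
  proof -
    have E: "(2 * s+1) * (2 * s+3) * w^4 - Q * a^2 =
      (2 * s+1) * (2 * s+3) * (4 * a^3 * b+4 * a * b^3+b^4) + (24 * s^2+48 * s+15) * (a^2 * b^2) + 6 * (2 * s+3) * (a^3 * b)"
      by (simp add: wab Q_def algebra_simps power2_eq_square power3_eq_cube power4_eq_xxxx)
    have "0 \<le> (2 * s+1) * (2 * s+3) * (4 * a^3 * b+4 * a * b^3+b^4) + (24 * s^2+48 * s+15) * (a^2 * b^2) + 6 * (2 * s+3) * (a^3 * b)"
      using a b s by (intro add_nonneg_nonneg mult_nonneg_nonneg) auto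
    then show ?thesis using E by linarith
  qed
  have "c * Q / w^4 \<le> c * ((2 * s+1) * (2 * s+3)) / a^2"
    using up c a w by (simp add: divide_simps)
  also have "\<dots> \<le> c * ((2 * s+1) * (2 * s+3)) / g^4"
    using c s gu g4 a by (intro divide_left_mono) auto
  finally show "(2 * s) * (2 * s+2) * ((2 * s+1) * (2 * s+3) * u^4 - 6 * (2 * s+3) * u^2 * v^2 + 3 * v^4) / w^4 \<le> 2 * s * (2 * s + 1) * (2 * s + 2) * (2 * s + 3) / g ^ 4"
    unfolding eP nc1 .
  have lo: "0 \<le> Q * a^2 + 3 * (s+1) * w^4"
  proof -
    have E: "Q * a^2 + 3 * (s+1) * w^4 =
      (4 * s^2+11 * s) * a^4 + 6 * a^2 * (a - b/2)^2 + (18 * s + 39/2) * (a^2 * b^2) + 12 * (s+1) * (a * b^3) + 3 * (s+1) * b^4"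
      by (simp add: wab Q_def algebra_simps power2_eq_square power3_eq_cube power4_eq_xxxx)
    have "0 \<le> (4 * s^2+11 * s) * a^4 + 6 * a^2 * (a - b/2)^2 + (18 * s + 39/2) * (a^2 * b^2) + 12 * (s+1) * (a * b^3) + 3 * (s+1) * b^4"
      using a b s by (intro add_nonneg_nonneg mult_nonneg_nonneg) auto
    then show ?thesis using E by linarith
  qed
  have "- (c * (3 * (s+1))) / g^4 \<le> - (c * (3 * (s+1))) / a^2"
    using c s gu g4 a by (intro divide_left_mono_neg) (auto simp: mult_pos_pos)
  also have "\<dots> \<le> c * Q / w^4"
  proof -
    have "- (3 * (s+1)) / a^2 \<le> Q / w^4" using lo a w by (simp add: divide_simps) (simp add: algebra_simps)
    then have "c * (- (3 * (s+1)) / a^2) \<le> c * (Q / w^4)" by (rule mult_left_mono) (use c in auto)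
    then show ?thesis using a by (simp add: field_simps)
  qed
  finally show "- (2 * s * (s + 1) * (2 * s + 2) * 3) / g ^ 4 \<le> (2 * s) * (2 * s+2) * ((2 * s+1) * (2 * s+3) * u^4 - 6 * (2 * s+3) * u^2 * v^2 + 3 * v^4) / w^4"
    unfolding eP nc2 .
qed


theorem lemma7p7:
  fixes \<gamma> s :: real
  assumes "\<gamma> > 0" and "s > 0"
  shows "(\<forall>j\<ge>1. \<forall>u v. u \<ge> \<gamma> \<longrightarrow>
            (deriv ^^ j) (Gfun v s) u / Gfun v s u = poly (Ppoly v s j) u / (u\<^sup>2 + v\<^sup>2) ^ j)
       \<and> (\<forall>u v. u \<ge> \<gamma> \<longrightarrow>
            - 2 * s / \<gamma> \<le> deriv (Gfun v s) u / Gfun v s u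
          \<and> deriv (Gfun v s) u / Gfun v s u < 0
          \<and> - s / (4 * \<gamma>\<^sup>2 * (s + 1)) \<le> (deriv ^^ 2) (Gfun v s) u / Gfun v s u
          \<and> (deriv ^^ 2) (Gfun v s) u / Gfun v s u \<le> 2 * s * (2 * s + 1) / \<gamma>\<^sup>2
          \<and> - (2 * s * (2 * s + 1) * (2 * s + 2)) / \<gamma> ^ 3 \<le> (deriv ^^ 3) (Gfun v s) u / Gfun v s u
          \<and> (deriv ^^ 3) (Gfun v s) u / Gfun v s u \<le> 2 * s * (2 * s + 2) / (\<gamma> ^ 3 * (s + 2)\<^sup>2)
          \<and> - (2 * s * (s + 1) * (2 * s + 2) * 3) / \<gamma> ^ 4 \<le> (deriv ^^ 4) (Gfun v s) u / Gfun v s u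
          \<and> (deriv ^^ 4) (Gfun v s) u / Gfun v s u
               \<le> 2 * s * (2 * s + 1) * (2 * s + 2) * (2 * s + 3) / \<gamma> ^ 4)"
proof (intro conjI allI impI)
  fix j u v assume j: "j \<ge> (1::nat)" and u: "u \<ge> \<gamma>"
  show "(deriv ^^ j) (Gfun v s) u / Gfun v s u = poly (Ppoly v s j) u / (u\<^sup>2 + v\<^sup>2) ^ j"
    using ratio[OF _ j] u assms by simp
next
  fix u v assume u: "u \<ge> \<gamma>"
  have u0: "u > 0" using u assms by linarith
  have r1: "deriv (Gfun v s) u / Gfun v s u = - 2 * s * u / (u\<^sup>2 + v\<^sup>2)"
    using ratio[OF u0, of 1 v s] P1[of v s u] by simp
  have r2: "(deriv ^^ 2) (Gfun v s) u / Gfun v s u = (2 * s * (2 * s+1) * u^2 - 2 * s * v^2) / (u\<^sup>2 + v\<^sup>2)^2"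
    using ratio[OF u0, of 2 v s] P2[of v s u] by simp
  have r3: "(deriv ^^ 3) (Gfun v s) u / Gfun v s u = (-2 * s * (2 * s+1) * (2 * s+2) * u^3 + 3 * (2 * s) * (2 * s+2) * u * v^2) / (u\<^sup>2 + v\<^sup>2)^3"
    using ratio[OF u0, of 3 v s] P3[of v s u] by simp
  have r4: "(deriv ^^ 4) (Gfun v s) u / Gfun v s u = (2 * s) * (2 * s+2) * ((2 * s+1) * (2 * s+3) * u^4 - 6 * (2 * s+3) * u^2 * v^2 + 3 * v^4) / (u\<^sup>2 + v\<^sup>2)^4"
    using ratio[OF u0, of 4 v s] P4[of v s u] by simp
  note b1 = B1[OF assms(1) u assms(2), of v]
  note b2 = B2[OF assms(1) u assms(2), of v]
  note b3 = B3[OF assms(1) u assms(2), of v]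
  note b4 = B4[OF assms(1) u assms(2), of v]
  show "- 2 * s / \<gamma> \<le> deriv (Gfun v s) u / Gfun v s u" using b1 r1 by simp
  show "deriv (Gfun v s) u / Gfun v s u < 0" using b1 r1 by simp
  show "- s / (4 * \<gamma>\<^sup>2 * (s + 1)) \<le> (deriv ^^ 2) (Gfun v s) u / Gfun v s u" using b2 r2 by simp
  show "(deriv ^^ 2) (Gfun v s) u / Gfun v s u \<le> 2 * s * (2 * s + 1) / \<gamma>\<^sup>2" using b2 r2 by simp
  show "- (2 * s * (2 * s + 1) * (2 * s + 2)) / \<gamma> ^ 3 \<le> (deriv ^^ 3) (Gfun v s) u / Gfun v s u" using b3 r3 by simp
  show "(deriv ^^ 3) (Gfun v s) u / Gfun v s u \<le> 2 * s * (2 * s + 2) / (\<gamma> ^ 3 * (s + 2)\<^sup>2)" using b3 r3 by simp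
  show "- (2 * s * (s + 1) * (2 * s + 2) * 3) / \<gamma> ^ 4 \<le> (deriv ^^ 4) (Gfun v s) u / Gfun v s u" using b4 r4 by simp
  show "(deriv ^^ 4) (Gfun v s) u / Gfun v s u
               \<le> 2 * s * (2 * s + 1) * (2 * s + 2) * (2 * s + 3) / \<gamma> ^ 4" using b4 r4 by simp
qed

end
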